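(* Consider the $n$-body problem in ${\bf S}^2$ with $n$ odd and all masses equal. Suppose ${\bf q}_i(t)=(r_i\cos(\omega t+\alpha_i), r_i\sin(\omega t+\alpha_i), z_i)$, $i=1,\dots,n$, with constants $\omega\ne0$, $\alpha_i$, $z_i\in[-1,1]$, $r_i=(1-z_i^2)^{1/2}$, is a solution of the equations of motion such that at every time the bodies are at the vertices of a regular $n$-gon inscribed in a great circle of ${\bf S}^2$. Then $z_i=0$ (i.e. $r_i=1$) for all $i$: the $n$-gon lies in, and rotates within, the great circle orthogonal to the rotation axis.
   Context: The $n$-body problem in ${\bf S}^2$: bodies of masses $m_1,\dots,m_n>0$ have positions ${\bf q}_i=(x_i,y_i,z_i)\in\mathbb R^3$ on the unit sphere ${\bf S}^2=\{{\bf q}:{\bf q}\cdot{\bf q}=1\}$ ($\cdot$ the Euclidean inner product), and satisfy $$\ddot{\bf q}_i=\sum_{j\ne i}\frac{m_j[{\bf q}_j-({\bf q}_i\cdot{\bf q}_j){\bf q}_i]}{[1-({\bf q}_i\cdot{\bf q}_j)^2]^{3/2}}-(\dot{\bf q}_i\cdot\dot{\bf q}_i){\bf q}_i,\qquad {\bf q}_i\cdot{\bf q}_i=1,\ \ {\bf q}_i\cdot\dot{\bf q}_i=0,$$ $i=1,\dots,n$, defined only for configurations with $({\bf q}_i\cdot{\bf q}_j)^2\ne 1$ for all $i\ne j$. *)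

theory Defs
  imports "HOL-Analysis.Analysis"
begin

definition sphere_force ::
  "nat \<Rightarrow> (nat \<Rightarrow> real) \<Rightarrow> (nat \<Rightarrow> real^3) \<Rightarrow> (nat \<Rightarrow> real^3) \<Rightarrow> nat \<Rightarrow> real^3" where
  "sphere_force n m q v i =
     (\<Sum>j\<in>{1..n} - {i}. (m j / ((1 - (q i \<bullet> q j)^2) powr (3/2))) *\<^sub>R (q j - (q i \<bullet> q j) *\<^sub>R q i))
     - (v i \<bullet> v i) *\<^sub>R q i"

definition is_sphere_nbody_solution ::
  "nat \<Rightarrow> (nat \<Rightarrow> real) \<Rightarrow> (nat \<Rightarrow> real \<Rightarrow> real^3) \<Rightarrow> bool" where
  "is_sphere_nbody_solution n m q \<longleftrightarrow>
     (\<exists>v a :: nat \<Rightarrow> real \<Rightarrow> real^3. \<forall>t.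
        (\<forall>i\<in>{1..n}. \<forall>j\<in>{1..n}. i \<noteq> j \<longrightarrow> (q i t \<bullet> q j t)^2 \<noteq> 1) \<and>
        (\<forall>i\<in>{1..n}.
           (q i has_vector_derivative v i t) (at t) \<and>
           (v i has_vector_derivative a i t) (at t) \<and>
           q i t \<bullet> q i t = 1 \<and> q i t \<bullet> v i t = 0 \<and>
           a i t = sphere_force n m (\<lambda>k. q k t) (\<lambda>k. v k t) i))"

definition regular_gon_on_great_circle :: "nat \<Rightarrow> (nat \<Rightarrow> real^3) \<Rightarrow> bool" where
  "regular_gon_on_great_circle n p \<longleftrightarrow>
     (\<exists>u w :: real^3. \<exists>\<phi>::real. norm u = 1 \<and> norm w = 1 \<and> u \<bullet> w = 0 \<and>
        p ` {1..n} = (\<lambda>k. cos (\<phi> + 2 * pi * real k / real n) *\<^sub>R u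
                         + sin (\<phi> + 2 * pi * real k / real n) *\<^sub>R w) ` {..<n})"

end

theory Submission
  imports Defs
begin

lemma sym_sum:
  fixes x :: "'a::real_inner" and c :: "real \<Rightarrow> real"
  assumes "finite G" "x \<in> G" "x \<bullet> x = 1" "\<forall>y\<in>G. (2*(x \<bullet> y)) *\<^sub>R x - y \<in> G"
  shows "(\<Sum>y\<in>G-{x}. c (x \<bullet> y) *\<^sub>R (y - (x \<bullet> y) *\<^sub>R x)) = 0"
proof -
  define R where "R y = (2*(x \<bullet> y)) *\<^sub>R x - y" for y
  have RR: "R (R y) = y" for y using assms(3)
    by (simp add: R_def inner_diff_right algebra_simps)
  have Rx: "R x = x" using assms(3) by (simp add: R_def scaleR_2)
  have RG: "R y \<in> G - {x}" if "y \<in> G - {x}" for y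
  proof -
    have "R y \<in> G" using assms(4) that by (simp add: R_def)
    moreover have "R y \<noteq> x" using RR[of y] Rx that by force
    ultimately show ?thesis by simp
  qed
  have xR: "x \<bullet> R y = x \<bullet> y" for y using assms(3)
    by (simp add: R_def inner_diff_right)
  define h where "h y = c (x \<bullet> y) *\<^sub>R (y - (x \<bullet> y) *\<^sub>R x)" for y
  have hR: "h (R y) = - h y" for y
    by (simp add: h_def xR) (simp add: R_def algebra_simps scaleR_diff_right del: scaleR_add_left add: scaleR_add_left[symmetric])
  have "sum h (G-{x}) = sum (\<lambda>y. h (R y)) (G-{x})"
    apply (rule sum.reindex_bij_witness[where i=R and j=R])
        apply (rule RR)
       apply (erule RG)
      apply (rule RR)
     apply (erule RG)
    apply (simp only: RR)
    done
  also have "\<dots> = - sum h (G-{x})" by (simp add: hR sum_negf)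
  finally have e: "sum h (G-{x}) = - sum h (G-{x})" .
  have "(2::real) *\<^sub>R sum h (G-{x}) = 0" using e eq_neg_iff_add_eq_0 scaleR_2 by metis
  then have "sum h (G-{x}) = 0" by simp
  then show ?thesis by (simp add: h_def)
qed

lemma circ_inner:
  fixes u w :: "'a::real_inner"
  assumes "u \<bullet> u = 1" "w \<bullet> w = 1" "u \<bullet> w = 0"
  shows "(cos a *\<^sub>R u + sin a *\<^sub>R w) \<bullet> (cos b *\<^sub>R u + sin b *\<^sub>R w) = cos (b - a)"
  using assms by (simp add: inner_add_left inner_add_right inner_commute cos_diff algebra_simps)

lemma trig1: "2*cos (d::real) * cos a - cos (a - d) = cos (a + d)"
  by (simp add: cos_add cos_diff)
lemma trig2: "2*cos (d::real) * sin a - sin (a - d) = sin (a + d)"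
  by (simp add: sin_add sin_diff)

lemma gon_refl:
  fixes u w :: "'a::real_inner"
  assumes "u \<bullet> u = 1" "w \<bullet> w = 1" "u \<bullet> w = 0" "n > 0"
    and g: "g = (\<lambda>k. cos (\<phi> + 2 * pi * real k / real n) *\<^sub>R u + sin (\<phi> + 2 * pi * real k / real n) *\<^sub>R w)"
  shows "(2 * (g k0 \<bullet> g k)) *\<^sub>R g k0 - g k \<in> g ` {..<n}"
proof -
  define a where "a = \<phi> + 2 * pi * real k0 / real n"
  define b where "b = \<phi> + 2 * pi * real k / real n"
  have cba: "cos (b - a) = cos (a - b)" by (metis cos_minus minus_diff_eq)
  have e1: "2 * cos (b - a) * cos a - cos b = cos (2*a - b)"
    using trig1[of "a - b" a] by (simp add: cba algebra_simps)
  have e2: "2 * cos (b - a) * sin a - sin b = sin (2*a - b)"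
    using trig2[of "a - b" a] by (simp add: cba algebra_simps)
  have eq: "(2 * (g k0 \<bullet> g k)) *\<^sub>R g k0 - g k = cos (2*a - b) *\<^sub>R u + sin (2*a - b) *\<^sub>R w"
    unfolding g a_def[symmetric] b_def[symmetric] circ_inner[OF assms(1-3)] e1[symmetric] e2[symmetric]
    by (simp add: algebra_simps)
  define d where "d = 2 * int k0 - int k"
  define k' where "k' = nat (d mod int n)"
  have k'n: "k' < n" using assms(4) pos_mod_bound[of "int n" d] pos_mod_sign[of "int n" d]
    by (simp add: k'_def nat_less_iff)
  have dk: "real_of_int d = real n * real_of_int (d div int n) + real k'"
  proof -
    have "d = int n * (d div int n) + d mod int n" by simp
    moreover have "d mod int n = int k'" using assms(4) by (simp add: k'_def)
    ultimately have "d = int n * (d div int n) + int k'" by simp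
    then have "real_of_int d = real_of_int (int n * (d div int n) + int k')" by simp
    then show ?thesis by simp
  qed
  have ang: "2*a - b = (\<phi> + 2 * pi * real k' / real n) + 2 * pi * real_of_int (d div int n)"
  proof -
    have "2*a - b = \<phi> + 2 * pi * real_of_int d / real n"
      using assms(4) by (simp add: a_def b_def d_def field_simps)
    also have "\<dots> = (\<phi> + 2 * pi * real k' / real n) + 2 * pi * real_of_int (d div int n)"
      using assms(4) by (simp add: dk field_simps)
    finally show ?thesis .
  qed
  have "sin (2*a - b) = sin (\<phi> + 2 * pi * real k' / real n) \<and> cos (2*a - b) = cos (\<phi> + 2 * pi * real k' / real n)"
    using sin_cos_eq_iff ang by blast
  then have eqk: "(2 * (g k0 \<bullet> g k)) *\<^sub>R g k0 - g k = g k'" unfolding eq by (simp add: g)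
  have "g k' \<in> g ` {..<n}" using k'n by (intro imageI) simp
  then show ?thesis by (simp only: eqk)
qed
lemma trig3: "cos (x::real) = 0 \<Longrightarrow> cos y = 0 \<Longrightarrow> (cos (y - x))^2 = 1"
proof -
  assume h: "cos x = 0" "cos y = 0"
  have "cos (y - x) = cos y * cos x + sin y * sin x" by (rule cos_diff)
  then have e: "cos (y - x) = sin y * sin x" using h by simp
  have sx: "(sin x)^2 = 1" using sin_cos_squared_add[of x] h by simp
  have sy: "(sin y)^2 = 1" using sin_cos_squared_add[of y] h by simp
  have "(cos (y - x))^2 = (sin y)^2 * (sin x)^2" unfolding e by (rule power_mult_distrib)
  then show ?thesis using sx sy by simp
qed

lemma comp_deriv:
  fixes f :: "real \<Rightarrow> real^3"
  assumes "(f has_vector_derivative f') (at t)" "\<And>s. f s $ k = g s" "(g has_real_derivative g') (at t)"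
  shows "f' $ k = g'"
proof -
  have "((\<lambda>s. f s $ k) has_vector_derivative f' $ k) (at t)"
    using bounded_linear.has_vector_derivative[OF bounded_linear_vec_nth assms(1)] .
  moreover have "(\<lambda>s. f s $ k) = g" using assms(2) by auto
  ultimately have "(g has_vector_derivative f' $ k) (at t)" by simp
  moreover have "(g has_vector_derivative g') (at t)"
    using assms(3) by (simp add: has_real_derivative_iff_has_vector_derivative)
  ultimately show ?thesis using vector_derivative_unique_at by blast
qed


theorem mainTheorem6:
  fixes n :: nat and m :: "nat \<Rightarrow> real" and \<mu> \<omega> :: real
    and \<alpha> z :: "nat \<Rightarrow> real" and q :: "nat \<Rightarrow> real \<Rightarrow> real^3"
  assumes "odd n" and "n \<ge> 3"
    and "\<mu> > 0" and "\<And>i. i \<in> {1..n} \<Longrightarrow> m i = \<mu>"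
    and "\<omega> \<noteq> 0"
    and "\<And>i. i \<in> {1..n} \<Longrightarrow> z i \<in> {-1..1}"
    and "\<And>i t. i \<in> {1..n} \<Longrightarrow>
           q i t = vector [sqrt (1 - (z i)^2) * cos (\<omega> * t + \<alpha> i),
                           sqrt (1 - (z i)^2) * sin (\<omega> * t + \<alpha> i), z i]"
    and "is_sphere_nbody_solution n m q"
    and "\<And>t. regular_gon_on_great_circle n (\<lambda>i. q i t)"
  shows "\<forall>i\<in>{1..n}. z i = 0"
proof -
  obtain v a :: "nat \<Rightarrow> real \<Rightarrow> real^3" where sol: "\<forall>t.
        (\<forall>i\<in>{1..n}. \<forall>j\<in>{1..n}. i \<noteq> j \<longrightarrow> (q i t \<bullet> q j t)^2 \<noteq> 1) \<and>
        (\<forall>i\<in>{1..n}.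
           (q i has_vector_derivative v i t) (at t) \<and>
           (v i has_vector_derivative a i t) (at t) \<and>
           q i t \<bullet> q i t = 1 \<and> q i t \<bullet> v i t = 0 \<and>
           a i t = sphere_force n m (\<lambda>k. q k t) (\<lambda>k. v k t) i)"
    using assms(8) unfolding is_sphere_nbody_solution_def by (elim exE) (rule that)
  define r where "r i = sqrt (1 - (z i)^2)" for i
  have r2: "(r i)^2 = 1 - (z i)^2" if "i \<in> {1..n}" for i
  proof -
    have h: "-1 \<le> z i" "z i \<le> 1" using assms(6)[OF that] by auto
    have "0 \<le> (1 - z i) * (1 + z i)" using h by (intro mult_nonneg_nonneg) auto
    then have "0 \<le> 1 - (z i)^2" by (simp add: algebra_simps power2_eq_square)
    then show ?thesis unfolding r_def by (rule real_sqrt_pow2)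
  qed
  have q1: "q i s $ 1 = r i * cos (\<omega> * s + \<alpha> i)" and q2: "q i s $ 2 = r i * sin (\<omega> * s + \<alpha> i)"
    and q3: "q i s $ 3 = z i" if "i \<in> {1..n}" for i s
    using assms(7)[OF that] by (simp_all add: r_def)
  have v1: "v i t $ 1 = - (r i * \<omega> * sin (\<omega> * t + \<alpha> i))"
    and v2: "v i t $ 2 = r i * \<omega> * cos (\<omega> * t + \<alpha> i)"
    and v3: "v i t $ 3 = 0" if i: "i \<in> {1..n}" for i t
  proof -
    have d: "(q i has_vector_derivative v i t) (at t)" using sol i by blast
    show "v i t $ 1 = - (r i * \<omega> * sin (\<omega> * t + \<alpha> i))"
      by (rule comp_deriv[OF d q1[OF i]]) (auto intro!: derivative_eq_intros)
    show "v i t $ 2 = r i * \<omega> * cos (\<omega> * t + \<alpha> i)"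
      by (rule comp_deriv[OF d q2[OF i]]) (auto intro!: derivative_eq_intros)
    show "v i t $ 3 = 0"
      by (rule comp_deriv[OF d q3[OF i]]) (auto intro!: derivative_eq_intros)
  qed
  have a3: "a i t $ 3 = 0" if i: "i \<in> {1..n}" for i t
  proof -
    have d: "(v i has_vector_derivative a i t) (at t)" using sol i by blast
    show ?thesis by (rule comp_deriv[OF d v3[OF i]]) (auto intro!: derivative_eq_intros)
  qed
  have vv: "v i t \<bullet> v i t = (r i)^2 * \<omega>^2" if i: "i \<in> {1..n}" for i t
  proof -
    have "v i t \<bullet> v i t = (r i * \<omega> * sin (\<omega> * t + \<alpha> i))^2 + (r i * \<omega> * cos (\<omega> * t + \<alpha> i))^2"
      by (simp add: inner_vec_def sum_3 v1[OF i] v2[OF i] v3[OF i] power2_eq_square)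
    also have "\<dots> = (r i)^2 * \<omega>^2 * (sin (\<omega> * t + \<alpha> i))^2 + (r i)^2 * \<omega>^2 * (cos (\<omega> * t + \<alpha> i))^2"
      by (simp only: power_mult_distrib)
    also have "\<dots> = (r i)^2 * \<omega>^2 * ((sin (\<omega> * t + \<alpha> i))^2 + (cos (\<omega> * t + \<alpha> i))^2)"
      by (simp only: distrib_left)
    finally show ?thesis by (simp only: sin_cos_squared_add mult_1_right)
  qed
  define p where "p j = q j 0" for j
  have nc: "(p i \<bullet> p j)^2 \<noteq> 1" if "i \<in> {1..n}" "j \<in> {1..n}" "i \<noteq> j" for i j
    using sol that unfolding p_def by blast
  have pp: "p i \<bullet> p i = 1" if "i \<in> {1..n}" for i
    using sol that unfolding p_def by blast
  have injp: "inj_on p {1..n}"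
  proof (rule inj_onI)
    fix i j assume "i \<in> {1..n}" "j \<in> {1..n}" "p i = p j"
    then show "i = j" using nc[of i j] pp[of i] by auto
  qed
  obtain u w :: "real^3" and \<phi> :: real where uw: "norm u = 1" "norm w = 1" "u \<bullet> w = 0"
    and gon: "p ` {1..n} = (\<lambda>k. cos (\<phi> + 2 * pi * real k / real n) *\<^sub>R u
                         + sin (\<phi> + 2 * pi * real k / real n) *\<^sub>R w) ` {..<n}"
    using assms(9)[of 0] unfolding regular_gon_on_great_circle_def p_def by blast
  define g where "g = (\<lambda>k. cos (\<phi> + 2 * pi * real k / real n) *\<^sub>R u
                         + sin (\<phi> + 2 * pi * real k / real n) *\<^sub>R w)"
  have gon': "p ` {1..n} = g ` {..<n}" using gon unfolding g_def .
  have uu: "u \<bullet> u = 1" "w \<bullet> w = 1" using uw by (simp_all add: dot_square_norm)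
  have n0: "n > 0" using assms(2) by simp
  have Gref: "\<forall>y\<in>p ` {1..n}. (2 * (x \<bullet> y)) *\<^sub>R x - y \<in> p ` {1..n}" if xP: "x \<in> p ` {1..n}" for x
  proof
    fix y assume "y \<in> p ` {1..n}"
    then obtain k where k: "k < n" "y = g k" unfolding gon' by blast
    obtain k0 where k0: "k0 < n" "x = g k0" using xP unfolding gon' by blast
    show "(2 * (x \<bullet> y)) *\<^sub>R x - y \<in> p ` {1..n}"
      unfolding gon' using gon_refl[OF uu uw(3) n0 g_def, of k0 k] k k0 by simp
  qed
  have force0: "(\<Sum>j\<in>{1..n} - {i}. (m j / ((1 - (p i \<bullet> p j)^2) powr (3/2))) *\<^sub>R (p j - (p i \<bullet> p j) *\<^sub>R p i)) = 0"
    if i: "i \<in> {1..n}" for i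
  proof -
    have xin: "p i \<in> p ` {1..n}" using i by (rule imageI)
    define h where "h y = (\<mu> / ((1 - (p i \<bullet> y)^2) powr (3/2))) *\<^sub>R (y - (p i \<bullet> y) *\<^sub>R p i)" for y
    have "(\<Sum>j\<in>{1..n} - {i}. (m j / ((1 - (p i \<bullet> p j)^2) powr (3/2))) *\<^sub>R (p j - (p i \<bullet> p j) *\<^sub>R p i))
        = (\<Sum>j\<in>{1..n} - {i}. h (p j))"
      by (rule sum.cong) (auto simp: h_def assms(4))
    also have "\<dots> = sum h (p ` ({1..n} - {i}))"
      by (simp only: sum.reindex[OF inj_on_subset[OF injp Diff_subset]] comp_def)
    also have "p ` ({1..n} - {i}) = p ` {1..n} - {p i}"
      using inj_on_image_set_diff[OF injp, of "{1..n}" "{i}"] i by simp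
    also have "sum h (p ` {1..n} - {p i}) = 0"
      unfolding h_def
      using sym_sum[OF finite_imageI[OF finite_atLeastAtMost] xin pp[OF i] Gref[OF xin], where c="\<lambda>s. \<mu> / ((1 - s^2) powr (3/2))"]
      by simp
    finally show ?thesis .
  qed
  have z01: "z i = 0 \<or> (z i)^2 = 1" if i: "i \<in> {1..n}" for i
  proof -
    have "a i 0 = sphere_force n m p (\<lambda>k. v k 0) i" using sol i unfolding p_def by blast
    then have "a i 0 = - (v i 0 \<bullet> v i 0) *\<^sub>R p i"
      unfolding sphere_force_def using force0[OF i] by simp
    then have "a i 0 $ 3 = - (v i 0 \<bullet> v i 0) * p i $ 3" by simp
    then have "0 = (r i)^2 * \<omega>^2 * z i" using a3[OF i] vv[OF i] q3[OF i] unfolding p_def by simp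
    then have "(1 - (z i)^2) * z i = 0" using assms(5) r2[OF i] by simp
    then show ?thesis by auto
  qed
  show ?thesis
  proof (rule ccontr)
    assume "\<not> (\<forall>i\<in>{1..n}. z i = 0)"
    then obtain i0 where i0: "i0 \<in> {1..n}" "z i0 \<noteq> 0" by blast
    have zi0: "(z i0)^2 = 1" using z01[OF i0(1)] i0(2) by simp
    have ri0: "r i0 = 0" using r2[OF i0(1)] zi0 by simp
    have orth: "p i0 \<bullet> p j = 0" if j: "j \<in> {1..n}" "j \<noteq> i0" for j
    proof -
      have ip: "p i0 \<bullet> p j = z i0 * z j"
        by (simp add: inner_vec_def sum_3 p_def q1[OF i0(1)] q2[OF i0(1)] q3[OF i0(1)] q3[OF j(1)] ri0)
      show ?thesis
      proof (rule ccontr)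
        assume "p i0 \<bullet> p j \<noteq> 0"
        then have "(z j)^2 = 1" using z01[OF j(1)] ip by auto
        then have "(p i0 \<bullet> p j)^2 = 1" using ip zi0 by (simp add: power_mult_distrib)
        then show False using nc[OF i0(1) j(1)] j(2) by simp
      qed
    qed
    define j1 where "j1 = (if i0 = 1 then 2 else (1::nat))"
    define j2 where "j2 = (if i0 = 3 then 2 else (3::nat))"
    have j12: "j1 \<in> {1..n}" "j2 \<in> {1..n}" "j1 \<noteq> i0" "j2 \<noteq> i0" "j1 \<noteq> j2"
      using assms(2) i0(1) by (auto simp: j1_def j2_def)
    define \<theta> where "\<theta> k = \<phi> + 2 * pi * real k / real n" for k
    have pg: "\<exists>k. p j = cos (\<theta> k) *\<^sub>R u + sin (\<theta> k) *\<^sub>R w" if "j \<in> {1..n}" for j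
    proof -
      have "p j \<in> g ` {..<n}" using that gon' by blast
      then obtain k where "p j = g k" by blast
      then show ?thesis unfolding g_def \<theta>_def by blast
    qed
    obtain ka kb kc where ka: "p i0 = cos (\<theta> ka) *\<^sub>R u + sin (\<theta> ka) *\<^sub>R w"
      and kb: "p j1 = cos (\<theta> kb) *\<^sub>R u + sin (\<theta> kb) *\<^sub>R w"
      and kc: "p j2 = cos (\<theta> kc) *\<^sub>R u + sin (\<theta> kc) *\<^sub>R w"
      using pg[OF i0(1)] pg[OF j12(1)] pg[OF j12(2)] by blast
    have c1: "cos (\<theta> kb - \<theta> ka) = 0" using orth[OF j12(1) j12(3)] ka kb circ_inner[OF uu uw(3)] by simp
    have c2: "cos (\<theta> kc - \<theta> ka) = 0" using orth[OF j12(2) j12(4)] ka kc circ_inner[OF uu uw(3)] by simp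
    have "(p j1 \<bullet> p j2)^2 = (cos (\<theta> kc - \<theta> kb))^2" using kb kc circ_inner[OF uu uw(3)] by simp
    also have "\<dots> = 1" using trig3[OF c1 c2] by simp
    finally show False using nc[OF j12(1) j12(2) j12(5)] by simp
  qed
qed

end
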